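(* Let $n \ge 4$ be an even integer, let $m = \frac{n-2}{2}$, and let $G_n$ be the $n$-vertex graph obtained from two disjoint cliques $Q_1, Q_2$, each isomorphic to $K_m$, together with two non-adjacent vertices $u$ and $v$, each adjacent to every vertex of $Q_1 \cup Q_2$ (i.e., $G_n$ is the join of $2K_m$ with $2K_1$). Then $\chi_{DP}(G_n) = \frac{n}{2} + 1$.
   Context: A correspondence assignment $(L,C)$ for a graph $G$ consists of a list $L(v)$ of colors for each vertex $v$ and, for each edge $uv$, a partial matching $C_{uv}$ between $\{u\}\times L(u)$ and $\{v\}\times L(v)$. An $(L,C)$-coloring is a choice $\phi(v)\in L(v)$ for each vertex $v$ such that for every edge $uv$, the pairs $(u,\phi(u))$ and $(v,\phi(v))$ are not matched in $C_{uv}$. $G$ is $k$-correspondence-colorable if it has an $(L,C)$-coloring for every correspondence assignment with all lists of size $k$; the correspondence chromatic number $\chi_{DP}(G)$ is the least such $k$. *)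

theory Defs
  imports Main
begin

(* A graph is given by a vertex set V and a symmetric irreflexive adjacency
   relation E (only used on V). Colours are natural numbers. *)

definition corr_assignment ::
  "'a set \<Rightarrow> ('a \<Rightarrow> 'a \<Rightarrow> bool) \<Rightarrow> nat \<Rightarrow> ('a \<Rightarrow> nat set) \<Rightarrow> ('a \<Rightarrow> 'a \<Rightarrow> (nat \<times> nat) set) \<Rightarrow> bool" where
  "corr_assignment V E k L C \<longleftrightarrow>
     (\<forall>v\<in>V. finite (L v) \<and> card (L v) = k) \<and>
     (\<forall>u\<in>V. \<forall>v\<in>V. E u v \<longrightarrow>
        C u v \<subseteq> L u \<times> L v \<and> inj_on fst (C u v) \<and> inj_on snd (C u v) \<and>
        C v u = (C u v)\<inverse>)"

definition corr_coloring ::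
  "'a set \<Rightarrow> ('a \<Rightarrow> 'a \<Rightarrow> bool) \<Rightarrow> ('a \<Rightarrow> nat set) \<Rightarrow> ('a \<Rightarrow> 'a \<Rightarrow> (nat \<times> nat) set) \<Rightarrow> ('a \<Rightarrow> nat) \<Rightarrow> bool" where
  "corr_coloring V E L C \<phi> \<longleftrightarrow>
     (\<forall>v\<in>V. \<phi> v \<in> L v) \<and>
     (\<forall>u\<in>V. \<forall>v\<in>V. E u v \<longrightarrow> (\<phi> u, \<phi> v) \<notin> C u v)"

definition corr_colorable :: "'a set \<Rightarrow> ('a \<Rightarrow> 'a \<Rightarrow> bool) \<Rightarrow> nat \<Rightarrow> bool" where
  "corr_colorable V E k \<longleftrightarrow>
     (\<forall>L C. corr_assignment V E k L C \<longrightarrow> (\<exists>\<phi>. corr_coloring V E L C \<phi>))"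

definition chi_DP :: "'a set \<Rightarrow> ('a \<Rightarrow> 'a \<Rightarrow> bool) \<Rightarrow> nat" where
  "chi_DP V E = (LEAST k. corr_colorable V E k)"

(* The graph G_n on vertex set {0..<n}: u = 0, v = 1,
   Q1 = {2..<m+2}, Q2 = {m+2..<n} with m = (n-2)/2. *)
definition Gn_verts :: "nat \<Rightarrow> nat set" where
  "Gn_verts n = {0..<n}"

definition Gn_adj :: "nat \<Rightarrow> nat \<Rightarrow> nat \<Rightarrow> bool" where
  "Gn_adj n x y \<longleftrightarrow> x < n \<and> y < n \<and> x \<noteq> y \<and>
     (let m = (n - 2) div 2 in
        (x \<in> {0,1} \<and> y \<ge> 2) \<or> (y \<in> {0,1} \<and> x \<ge> 2) \<or>
        (x \<in> {2..<m+2} \<and> y \<in> {2..<m+2}) \<or>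
        (x \<in> {m+2..<n} \<and> y \<in> {m+2..<n}))"

end

theory Submission imports Defs begin

lemma greedy:
  fixes n k :: nat and E :: "nat \<Rightarrow> nat \<Rightarrow> bool"
  assumes ca: "corr_assignment {0..<n} E k L C"
  and sym: "\<And>x y. E x y \<Longrightarrow> E y x"
  and irr: "\<And>x. \<not> E x x"
  and deg: "\<And>x. x < n \<Longrightarrow> card {y. y < x \<and> E x y} < k"
  shows "\<exists>\<phi>. corr_coloring {0..<n} E L C \<phi>"
proof -
  have L: "\<And>v. v < n \<Longrightarrow> finite (L v) \<and> card (L v) = k"
  proof -
    fix v assume "v < n" then have "v \<in> {0..<n}" by simp
    then show "finite (L v) \<and> card (L v) = k" using ca unfolding corr_assignment_def by blast
  qed
  have Cp: "\<And>u v. u < n \<Longrightarrow> v < n \<Longrightarrow> E u v \<Longrightarrow>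
        C u v \<subseteq> L u \<times> L v \<and> inj_on fst (C u v) \<and> inj_on snd (C u v) \<and> C v u = (C u v)\<inverse>"
  proof -
    fix u v assume "u < n" "v < n" "E u v" then have "u \<in> {0..<n}" "v \<in> {0..<n}" by simp_all
    then show "C u v \<subseteq> L u \<times> L v \<and> inj_on fst (C u v) \<and> inj_on snd (C u v) \<and> C v u = (C u v)\<inverse>"
      using ca \<open>E u v\<close> unfolding corr_assignment_def by blast
  qed
  have "\<forall>j. j \<le> n \<longrightarrow> (\<exists>\<phi>. (\<forall>x<j. \<phi> x \<in> L x) \<and> (\<forall>x<j. \<forall>y<j. E x y \<longrightarrow> (\<phi> x, \<phi> y) \<notin> C x y))"
  proof (intro allI)
    fix j show "j \<le> n \<longrightarrow> (\<exists>\<phi>. (\<forall>x<j. \<phi> x \<in> L x) \<and> (\<forall>x<j. \<forall>y<j. E x y \<longrightarrow> (\<phi> x, \<phi> y) \<notin> C x y))"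
    proof (induction j)
      case 0 then show ?case by auto
    next
      case (Suc j)
      show ?case
      proof
        assume jn: "Suc j \<le> n"
        then have jlt: "j < n" by simp
        from Suc.IH jn obtain \<phi> where p1: "\<forall>x<j. \<phi> x \<in> L x"
          and p2: "\<forall>x<j. \<forall>y<j. E x y \<longrightarrow> (\<phi> x, \<phi> y) \<notin> C x y" by auto
        define N where "N = {y. y < j \<and> E j y}"
        define F where "F = (\<Union>y\<in>N. {c. (c, \<phi> y) \<in> C j y})"
        have finN: "finite N" unfolding N_def by auto
        have sub: "\<And>y. y \<in> N \<Longrightarrow> {c. (c, \<phi> y) \<in> C j y} \<subseteq> L j"
        proof -
          fix y assume "y \<in> N"
          then have "y < n" "E j y" using jlt unfolding N_def by auto
          then have "C j y \<subseteq> L j \<times> L y" using Cp jlt by blast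
          then show "{c. (c, \<phi> y) \<in> C j y} \<subseteq> L j" by blast
        qed
        have c1: "\<And>y. y \<in> N \<Longrightarrow> card {c. (c, \<phi> y) \<in> C j y} \<le> 1"
        proof -
          fix y assume y: "y \<in> N"
          have inj: "inj_on snd (C j y)" using Cp jlt y unfolding N_def by auto
          have fin: "finite {c. (c, \<phi> y) \<in> C j y}" using sub[OF y] L[OF jlt] finite_subset by blast
          have "\<forall>a1 \<in> {c. (c, \<phi> y) \<in> C j y}. \<forall>a2 \<in> {c. (c, \<phi> y) \<in> C j y}. a1 = a2"
            using inj unfolding inj_on_def by (metis (no_types, lifting) mem_Collect_eq prod.inject snd_conv)
          then show "card {c. (c, \<phi> y) \<in> C j y} \<le> 1" using card_le_Suc0_iff_eq[OF fin] by simp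
        qed
        have "card F \<le> (\<Sum>y\<in>N. card {c. (c, \<phi> y) \<in> C j y})"
          unfolding F_def using card_UN_le[OF finN] .
        also have "\<dots> \<le> (\<Sum>y\<in>N. 1)" by (rule sum_mono) (use c1 in auto)
        also have "\<dots> = card N" by simp
        also have "\<dots> < k" using deg[OF jlt] unfolding N_def .
        finally have cF: "card F < k" .
        have FL: "F \<subseteq> L j" using sub unfolding F_def by blast
        have "\<not> L j \<subseteq> F"
        proof
          assume "L j \<subseteq> F"
          then have "card (L j) \<le> card F" using card_mono L[OF jlt] FL finite_subset by metis
          then show False using cF L[OF jlt] by simp
        qed
        then obtain c where c: "c \<in> L j" "c \<notin> F" by blast
        let ?\<psi> = "\<phi>(j := c)"
        have q1: "\<forall>x<Suc j. ?\<psi> x \<in> L x" using p1 c by (auto simp: less_Suc_eq)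
        have q2: "\<forall>x<Suc j. \<forall>y<Suc j. E x y \<longrightarrow> (?\<psi> x, ?\<psi> y) \<notin> C x y"
        proof (intro allI impI)
          fix x y assume x: "x < Suc j" and y: "y < Suc j" and e: "E x y"
          show "(?\<psi> x, ?\<psi> y) \<notin> C x y"
          proof (cases "x = j")
            case True
            then have "y \<noteq> j" using irr e by auto
            then have "y \<in> N" using y e True unfolding N_def by auto
            then show ?thesis using c True \<open>y \<noteq> j\<close> unfolding F_def by auto
          next
            case False
            then have xj: "x < j" using x by simp
            show ?thesis
            proof (cases "y = j")
              case True
              then have "y \<noteq> x" using False by simp
              have ejx: "E j x" using sym e True by simp
              then have "x \<in> N" using xj unfolding N_def by auto
              have "C x j = (C j x)\<inverse>" using Cp[OF jlt _ ejx] xj jlt by auto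
              then show ?thesis using c \<open>x \<in> N\<close> True False unfolding F_def by auto
            next
              case False
              then show ?thesis using p2 xj y \<open>x \<noteq> j\<close> e by auto
            qed
          qed
        qed
        show "\<exists>\<phi>. (\<forall>x<Suc j. \<phi> x \<in> L x) \<and> (\<forall>x<Suc j. \<forall>y<Suc j. E x y \<longrightarrow> (\<phi> x, \<phi> y) \<notin> C x y)"
          using q1 q2 by blast
      qed
    qed
  qed
  then obtain \<phi> where "(\<forall>x<n. \<phi> x \<in> L x) \<and> (\<forall>x<n. \<forall>y<n. E x y \<longrightarrow> (\<phi> x, \<phi> y) \<notin> C x y)" by blast
  then have "corr_coloring {0..<n} E L C \<phi>" unfolding corr_coloring_def by simp
  then show ?thesis by blast
qed

lemma adj_iff:
  "Gn_adj (2*m+2) x y \<longleftrightarrow> x < 2*m+2 \<and> y < 2*m+2 \<and> x \<noteq> y \<and>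
    ((x \<le> 1 \<and> 2 \<le> y) \<or> (y \<le> 1 \<and> 2 \<le> x) \<or> (2 \<le> x \<and> x < m+2 \<and> 2 \<le> y \<and> y < m+2) \<or> (m+2 \<le> x \<and> m+2 \<le> y))"
  unfolding Gn_adj_def Let_def by auto

lemma upper:
  assumes "m \<ge> 1"
  shows "corr_colorable {0..<2*m+2} (Gn_adj (2*m+2)) (m+2)"
  unfolding corr_colorable_def
proof (intro allI impI)
  fix L C assume ca: "corr_assignment {0..<2*m+2} (Gn_adj (2*m+2)) (m+2) L C"
  show "\<exists>\<phi>. corr_coloring {0..<2*m+2} (Gn_adj (2*m+2)) L C \<phi>"
  proof (rule greedy[OF ca])
    show "\<And>x y. Gn_adj (2*m+2) x y \<Longrightarrow> Gn_adj (2*m+2) y x" unfolding adj_iff by auto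
    show "\<And>x. \<not> Gn_adj (2*m+2) x x" unfolding adj_iff by auto
    fix x assume x: "x < 2*m+2"
    show "card {y. y < x \<and> Gn_adj (2*m+2) x y} < m+2"
    proof (cases "x \<le> 1")
      case True
      then have "{y. y < x \<and> Gn_adj (2*m+2) x y} = {}" unfolding adj_iff by auto
      then have "card {y. y < x \<and> Gn_adj (2*m+2) x y} = 0" by (simp only: card.empty)
      then show ?thesis by linarith
    next
      case False
      show ?thesis
      proof (cases "x < m+2")
        case True
        have "{y. y < x \<and> Gn_adj (2*m+2) x y} \<subseteq> {..<x}" by auto
        then have "card {y. y < x \<and> Gn_adj (2*m+2) x y} \<le> card {..<x}" by (intro card_mono) auto
        then show ?thesis using True by simp
      next
        case F2: False
        have "{y. y < x \<and> Gn_adj (2*m+2) x y} \<subseteq> {0,1} \<union> {m+2..<x}" using F2 unfolding adj_iff by auto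
        then have "card {y. y < x \<and> Gn_adj (2*m+2) x y} \<le> card ({0,1} \<union> {m+2..<x})" by (intro card_mono) auto
        also have "\<dots> \<le> card {0::nat,1} + card {m+2..<x}" by (rule card_Un_le)
        also have "\<dots> = 2 + (x - (m+2))" by simp
        finally show ?thesis using x F2 by linarith
      qed
    qed
  qed
qed

lemma modsuc: "(b::nat) < k \<Longrightarrow> b' < k \<Longrightarrow> (b+1) mod k = (b'+1) mod k \<Longrightarrow> b = b'"
proof -
  assume h: "b < k" "b' < k" "(b+1) mod k = (b'+1) mod k"
  have e: "\<And>c::nat. c < k \<Longrightarrow> (c+1) mod k = (if c+1 = k then 0 else c+1)" by auto
  have e1: "(b+1) mod k = (if b+1 = k then 0 else b+1)" using e h(1) by blast
  have e2: "(b'+1) mod k = (if b'+1 = k then 0 else b'+1)" using e h(2) by blast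
  show "b = b'" using h(3) unfolding e1 e2 by (simp split: if_splits)
qed

lemma inj_conv1: "inj_on fst (R\<inverse>) = inj_on snd R"
proof
  assume h: "inj_on fst (R\<inverse>)"
  show "inj_on snd R"
  proof (rule inj_onI)
    fix x y assume "x \<in> R" "y \<in> R" "snd x = snd y"
    have "(snd x, fst x) \<in> R\<inverse>" "(snd y, fst y) \<in> R\<inverse>" using \<open>x \<in> R\<close> \<open>y \<in> R\<close> by simp_all
    then have "(snd x, fst x) = (snd y, fst y)" by (rule inj_onD[OF h, rotated]) (simp add: \<open>snd x = snd y\<close>)
    then show "x = y" by (simp add: prod_eq_iff)
  qed
next
  assume h: "inj_on snd R"
  show "inj_on fst (R\<inverse>)"
  proof (rule inj_onI)
    fix x y assume "x \<in> R\<inverse>" "y \<in> R\<inverse>" "fst x = fst y"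
    have "(snd x, fst x) \<in> R" using \<open>x \<in> R\<inverse>\<close> by (metis converseD prod.collapse)
    moreover have "(snd y, fst y) \<in> R" using \<open>y \<in> R\<inverse>\<close> by (metis converseD prod.collapse)
    ultimately have "(snd x, fst x) = (snd y, fst y)" by (rule inj_onD[OF h, rotated]) (simp add: \<open>fst x = fst y\<close>)
    then show "x = y" by (simp add: prod_eq_iff)
  qed
qed
lemma inj_conv2: "inj_on snd (R\<inverse>) = inj_on fst R"
  using inj_conv1[of "R\<inverse>"] by simp

lemma converse_subset_swap: "R \<subseteq> A \<times> B \<Longrightarrow> R\<inverse> \<subseteq> B \<times> A" by auto

lemma lower:
  assumes m1: "m \<ge> 1" and km: "k \<le> m+1"
  shows "\<not> corr_colorable {0..<2*m+2} (Gn_adj (2*m+2)) k"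
proof
  assume col: "corr_colorable {0..<2*m+2} (Gn_adj (2*m+2)) k"
  define Q1 where "Q1 = {2..<m+2}"
  define Q2 where "Q2 = {m+2..<2*m+2}"
  define sh where "sh = {(b, (b+1) mod k) | b. b < k}"
  define L where "L = (\<lambda>x::nat. {0..<k})"
  define C where "C = (\<lambda>x y. if x = 1 \<and> y \<in> Q2 then sh else if y = 1 \<and> x \<in> Q2 then sh\<inverse> else Id_on {0..<k})"
  have n1Q2: "1 \<notin> Q2" unfolding Q2_def by simp
  have CId: "\<And>x y. x \<noteq> 1 \<Longrightarrow> y \<noteq> 1 \<Longrightarrow> C x y = Id_on {0..<k}" unfolding C_def by simp
  have CId1: "\<And>x. x \<notin> Q2 \<Longrightarrow> C x 1 = Id_on {0..<k}" unfolding C_def using n1Q2 by auto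
  have Csh1: "\<And>x. x \<in> Q2 \<Longrightarrow> C x 1 = sh\<inverse>" unfolding C_def using n1Q2 by auto
  have shsub: "sh \<subseteq> {0..<k} \<times> {0..<k}" unfolding sh_def by auto
  have shf: "inj_on fst sh" unfolding sh_def inj_on_def by auto
  have shs: "inj_on snd sh"
  proof -
    show ?thesis
    proof (rule inj_onI)
      fix x y assume "x \<in> sh" "y \<in> sh" "snd x = snd y"
      then obtain b b' where "x = (b, (b+1) mod k)" "y = (b', (b'+1) mod k)" "b < k" "b' < k"
        unfolding sh_def by blast
      then show "x = y" using modsuc \<open>snd x = snd y\<close> by simp
    qed
  qed
  have idf: "inj_on fst (Id_on {0..<k})" "inj_on snd (Id_on {0..<k})" by (auto simp: inj_on_def)
  have ca: "corr_assignment {0..<2*m+2} (Gn_adj (2*m+2)) k L C"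
    unfolding corr_assignment_def
  proof (rule conjI)
    show "\<forall>v\<in>{0..<2*m+2}. finite (L v) \<and> card (L v) = k" unfolding L_def by auto
  next
    show "\<forall>u\<in>{0..<2*m+2}. \<forall>v\<in>{0..<2*m+2}. Gn_adj (2*m+2) u v \<longrightarrow>
        C u v \<subseteq> L u \<times> L v \<and> inj_on fst (C u v) \<and> inj_on snd (C u v) \<and> C v u = (C u v)\<inverse>"
  proof (intro ballI impI)
    fix u v assume u: "u \<in> {0..<2*m+2}" and v: "v \<in> {0..<2*m+2}" and e: "Gn_adj (2*m+2) u v"
    have "u \<noteq> v" using e unfolding Gn_adj_def by auto
    consider "u = 1 \<and> v \<in> Q2" | "v = 1 \<and> u \<in> Q2" | "\<not>(u = 1 \<and> v \<in> Q2) \<and> \<not>(v = 1 \<and> u \<in> Q2)" by blast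
    then show "C u v \<subseteq> L u \<times> L v \<and> inj_on fst (C u v) \<and> inj_on snd (C u v) \<and> C v u = (C u v)\<inverse>"
    proof cases
      case 1
      then have "C u v = sh" "C v u = sh\<inverse>" unfolding C_def using n1Q2 by auto
      then show ?thesis using shsub shf shs unfolding L_def by auto
    next
      case 2
      then have "C v u = sh" "C u v = sh\<inverse>" unfolding C_def using n1Q2 by auto
      then show ?thesis using shsub shf shs unfolding L_def by (simp add: inj_conv1 inj_conv2 converse_subset_swap)
    next
      case 3
      then have "C v u = Id_on {0..<k}" "C u v = Id_on {0..<k}" unfolding C_def by auto
      then show ?thesis unfolding L_def by (auto simp: inj_on_def)
    qed
  qed
  qed
  then obtain \<phi> where phi: "corr_coloring {0..<2*m+2} (Gn_adj (2*m+2)) L C \<phi>"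
    using col unfolding corr_colorable_def by blast
  have inL: "\<And>x. x < 2*m+2 \<Longrightarrow> \<phi> x < k"
  proof -
    fix x assume "x < 2*m+2" then have "x \<in> {0..<2*m+2}" by simp
    then show "\<phi> x < k" using phi unfolding corr_coloring_def L_def by auto
  qed
  have ok: "\<And>x y. x < 2*m+2 \<Longrightarrow> y < 2*m+2 \<Longrightarrow> Gn_adj (2*m+2) x y \<Longrightarrow> (\<phi> x, \<phi> y) \<notin> C x y"
  proof -
    fix x y assume "x < 2*m+2" "y < 2*m+2" "Gn_adj (2*m+2) x y"
    moreover have "x \<in> {0..<2*m+2}" "y \<in> {0..<2*m+2}" using calculation by simp_all
    ultimately show "(\<phi> x, \<phi> y) \<notin> C x y" using phi unfolding corr_coloring_def by blast
  qed
  have okId: "\<And>x y. x < 2*m+2 \<Longrightarrow> y < 2*m+2 \<Longrightarrow> Gn_adj (2*m+2) x y \<Longrightarrow> C x y = Id_on {0..<k} \<Longrightarrow> \<phi> x \<noteq> \<phi> y"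
  proof
    fix x y assume h: "x < 2*m+2" "y < 2*m+2" "Gn_adj (2*m+2) x y" "C x y = Id_on {0..<k}" "\<phi> x = \<phi> y"
    then have "(\<phi> x, \<phi> y) \<in> C x y" using inL[OF h(1)] by (simp add: Id_on_def)
    then show False using ok[OF h(1-3)] by simp
  qed
  define a where "a = \<phi> 0"
  define b where "b = \<phi> 1"
  have a: "a < k" unfolding a_def using inL by simp
  have b: "b < k" unfolding b_def using inL by simp
  have cQ1: "card Q1 = m" unfolding Q1_def by simp
  have cQ2: "card Q2 = m" unfolding Q2_def by simp
  have injQ1: "inj_on \<phi> Q1"
  proof (rule inj_onI, rule ccontr)
    fix x y assume h: "x \<in> Q1" "y \<in> Q1" "\<phi> x = \<phi> y" "x \<noteq> y"
    have e: "Gn_adj (2*m+2) x y" using h unfolding adj_iff Q1_def by auto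
    have "C x y = Id_on {0..<k}" using h by (intro CId) (auto simp: Q1_def)
    then show False using okId[OF _ _ e] h unfolding Q1_def by auto
  qed
  have injQ2: "inj_on \<phi> Q2"
  proof (rule inj_onI, rule ccontr)
    fix x y assume h: "x \<in> Q2" "y \<in> Q2" "\<phi> x = \<phi> y" "x \<noteq> y"
    have e: "Gn_adj (2*m+2) x y" using h unfolding adj_iff Q2_def by auto
    have "C x y = Id_on {0..<k}" using h by (intro CId) (auto simp: Q2_def)
    then show False using okId[OF _ _ e] h unfolding Q2_def by auto
  qed
  have Q1a: "\<phi> x \<noteq> a" if x: "x \<in> Q1" for x
  proof -
    have e: "Gn_adj (2*m+2) x 0" using x unfolding adj_iff Q1_def by auto
    have "C x 0 = Id_on {0..<k}" using x by (intro CId) (auto simp: Q1_def)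
    then show ?thesis using okId[OF _ _ e] x unfolding Q1_def a_def by auto
  qed
  have Q2a: "\<phi> x \<noteq> a" if x: "x \<in> Q2" for x
  proof -
    have e: "Gn_adj (2*m+2) x 0" using x unfolding adj_iff Q2_def by auto
    have "C x 0 = Id_on {0..<k}" using x by (intro CId) (auto simp: Q2_def)
    then show ?thesis using okId[OF _ _ e] x unfolding Q2_def a_def by auto
  qed
  have Q1b: "\<phi> x \<noteq> b" if x: "x \<in> Q1" for x
  proof -
    have e: "Gn_adj (2*m+2) x 1" using x unfolding adj_iff Q1_def by auto
    have "x \<notin> Q2" using x unfolding Q1_def Q2_def by auto
    then have "C x 1 = Id_on {0..<k}" by (rule CId1)
    then show ?thesis using okId[OF _ _ e] x unfolding Q1_def b_def by auto
  qed
  have Q2b: "\<phi> x \<noteq> (b+1) mod k" if x: "x \<in> Q2" for x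
  proof
    assume eq: "\<phi> x = (b+1) mod k"
    have e: "Gn_adj (2*m+2) x 1" using x unfolding adj_iff Q2_def by auto
    have xl: "x < 2*m+2" using x unfolding Q2_def by auto
    have "(b, (b+1) mod k) \<in> sh" unfolding sh_def using b by auto
    then have "(\<phi> x, \<phi> 1) \<in> C x 1" using Csh1[OF x] eq unfolding b_def by simp
    then show False using ok[OF xl _ e] by simp
  qed
  show False
  proof (cases "k \<le> m")
    case True
    have "\<phi> ` Q1 \<subseteq> {0..<k} - {a}"
    proof (rule image_subsetI)
      fix x assume x: "x \<in> Q1" then have "x < 2*m+2" unfolding Q1_def by simp
      then show "\<phi> x \<in> {0..<k} - {a}" using Q1a[OF x] inL[of x] by simp
    qed
    then have "card Q1 \<le> card ({0..<k} - {a})" by (intro card_inj_on_le[OF injQ1]) auto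
    also have "\<dots> = k - 1" using a by simp
    finally show False using cQ1 True m1 by linarith
  next
    case False
    then have k: "k = m+1" using km by simp
    show False
    proof (cases "a = b")
      case False
      have "\<phi> ` Q1 \<subseteq> {0..<k} - {a,b}"
      proof (rule image_subsetI)
        fix x assume x: "x \<in> Q1" then have "x < 2*m+2" unfolding Q1_def by simp
        then show "\<phi> x \<in> {0..<k} - {a,b}" using Q1a[OF x] Q1b[OF x] inL[of x] by simp
      qed
      then have "card Q1 \<le> card ({0..<k} - {a,b})" by (intro card_inj_on_le[OF injQ1]) auto
      also have "\<dots> = k - 2" using a b False by (simp add: card_Diff_subset)
      finally show False using cQ1 k m1 by linarith
    next
      case True
      define c where "c = (b+1) mod k"
      have c: "c < k" unfolding c_def using b by simp
      have ac: "a \<noteq> c"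
      proof (cases "b + 1 < k")
        case True then show ?thesis unfolding c_def using \<open>a = b\<close> by simp
      next
        case False then have "b + 1 = k" using b by simp
        then show ?thesis unfolding c_def using \<open>a = b\<close> k m1 by simp
      qed
      have "\<phi> ` Q2 \<subseteq> {0..<k} - {a,c}"
      proof (rule image_subsetI)
        fix x assume x: "x \<in> Q2" then have "x < 2*m+2" unfolding Q2_def by simp
        then show "\<phi> x \<in> {0..<k} - {a,c}" using Q2a[OF x] Q2b[OF x] inL[of x] unfolding c_def by simp
      qed
      then have "card Q2 \<le> card ({0..<k} - {a,c})" by (intro card_inj_on_le[OF injQ2]) auto
      also have "\<dots> = k - 2" using a c ac by (simp add: card_Diff_subset)
      finally show False using cQ2 k m1 by linarith
    qed
  qed
qed


theorem theorem3:
  fixes n :: nat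
  assumes "even n" and "n \<ge> 4"
  shows "chi_DP (Gn_verts n) (Gn_adj n) = n div 2 + 1"
proof -
  define m where "m = (n - 2) div 2"
  have n: "n = 2*m+2" and m1: "m \<ge> 1" using assms unfolding m_def by (auto elim!: evenE)
  have "(LEAST k. corr_colorable {0..<2*m+2} (Gn_adj (2*m+2)) k) = m+2"
  proof (rule Least_equality)
    show "corr_colorable {0..<2*m+2} (Gn_adj (2*m+2)) (m+2)" by (rule upper[OF m1])
    fix y assume "corr_colorable {0..<2*m+2} (Gn_adj (2*m+2)) y"
    then show "m+2 \<le> y" using lower[OF m1, of y] by (cases "y \<le> m+1") auto
  qed
  then show ?thesis unfolding chi_DP_def Gn_verts_def using n by simp
qed

end
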